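(* Let $G$ be an abelian Hausdorff topological group and let $A$ be an infinite absolutely Cauchy summable subset of $G$ such that the cyclic subgroup $\langle a\rangle$ is discrete (in the subspace topology) for every $a\in A$. Then $A$ contains an infinite topologically independent subset.
   Context: $A\subseteq G$ is absolutely Cauchy summable if for every neighbourhood $U$ of $0$ there is a finite $F\subseteq A$ such that the subgroup $\langle A\setminus F\rangle$ generated by $A\setminus F$ is contained in $U$. A subset $B\subseteq G$ is topologically independent if $0\notin B$ and for every neighbourhood $W$ of $0$ there is a neighbourhood $U$ of $0$ such that for every finite $F\subseteq B$ and all integers $\{z_a:a\in F\}$, $\sum_{a\in F}z_aa\in U$ implies $z_aa\in W$ for all $a\in F$. *)

theory Defs
  imports Complex_Main
begin

definition zmult :: "int \<Rightarrow> 'a::group_add \<Rightarrow> 'a" where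
  "zmult z a = (if 0 \<le> z then ((plus a) ^^ nat z) 0 else - (((plus a) ^^ nat (- z)) 0))"

definition add_subgroup :: "'a::group_add set \<Rightarrow> bool" where
  "add_subgroup H \<longleftrightarrow> 0 \<in> H \<and> (\<forall>x\<in>H. \<forall>y\<in>H. x - y \<in> H)"

definition gen_subgroup :: "'a::group_add set \<Rightarrow> 'a set" where
  "gen_subgroup S = \<Inter>{H. add_subgroup H \<and> S \<subseteq> H}"

definition nhd0 :: "'a::{zero,topological_space} set \<Rightarrow> bool" where
  "nhd0 U \<longleftrightarrow> (\<exists>V. open V \<and> 0 \<in> V \<and> V \<subseteq> U)"

definition abs_cauchy_summable :: "'a::{group_add,topological_space} set \<Rightarrow> bool" where
  "abs_cauchy_summable A \<longleftrightarrow>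
     (\<forall>U. nhd0 U \<longrightarrow> (\<exists>F. finite F \<and> F \<subseteq> A \<and> gen_subgroup (A - F) \<subseteq> U))"

definition top_independent :: "'a::{ab_group_add,topological_space} set \<Rightarrow> bool" where
  "top_independent B \<longleftrightarrow> 0 \<notin> B \<and>
     (\<forall>W. nhd0 W \<longrightarrow> (\<exists>U. nhd0 U \<and>
        (\<forall>F z. finite F \<and> F \<subseteq> B \<longrightarrow>
           (\<Sum>a\<in>F. zmult (z a) a) \<in> U \<longrightarrow> (\<forall>a\<in>F. zmult (z a) a \<in> W))))"

definition discrete_subspace :: "'a::topological_space set \<Rightarrow> bool" where
  "discrete_subspace S \<longleftrightarrow> (\<forall>x\<in>S. \<exists>V. open V \<and> V \<inter> S = {x})"

end

theory Submission
  imports Defs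
begin

lemma gs_sub: "add_subgroup (gen_subgroup S)"
  unfolding gen_subgroup_def add_subgroup_def by auto

lemma gs_incl: "S \<subseteq> gen_subgroup S"
  unfolding gen_subgroup_def by auto

lemma gs_least: "add_subgroup H \<Longrightarrow> S \<subseteq> H \<Longrightarrow> gen_subgroup S \<subseteq> H"
  unfolding gen_subgroup_def by auto

lemma gs_mono: "S \<subseteq> T \<Longrightarrow> gen_subgroup S \<subseteq> gen_subgroup T"
  by (meson gs_incl gs_least gs_sub order_trans)

lemma sg_zero: "add_subgroup H \<Longrightarrow> 0 \<in> H"
  unfolding add_subgroup_def by auto

lemma sg_neg: "add_subgroup H \<Longrightarrow> x \<in> H \<Longrightarrow> - x \<in> H"
  unfolding add_subgroup_def by (metis diff_0)

lemma sg_add: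
  fixes x :: "'a::group_add"
  shows "add_subgroup H \<Longrightarrow> x \<in> H \<Longrightarrow> y \<in> H \<Longrightarrow> x + y \<in> H"
  using sg_neg[of H y] unfolding add_subgroup_def by (metis diff_minus_eq_add)

lemma sg_iter:
  fixes a :: "'a::group_add"
  assumes "add_subgroup H" "a \<in> H"
  shows "((plus a) ^^ n) 0 \<in> H"
  by (induction n) (auto intro: sg_add sg_zero assms)

lemma sg_zmult:
  fixes a :: "'a::group_add"
  assumes "add_subgroup H" "a \<in> H"
  shows "zmult z a \<in> H"
  unfolding zmult_def using sg_iter[OF assms] sg_neg[OF assms(1)] by auto

lemma sg_sum:
  fixes f :: "'b \<Rightarrow> 'a::ab_group_add"
  assumes "add_subgroup H" "\<forall>i\<in>I. f i \<in> H"
  shows "sum f I \<in> H"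
  using assms(2)
proof (induction I rule: infinite_finite_induct)
  case (infinite A) then show ?case by (simp add: sg_zero assms(1))
next
  case empty then show ?case by (simp add: sg_zero assms(1))
next
  case (insert x F) then show ?case by (simp add: sg_add assms(1))
qed

lemma diff_nhd:
  fixes V :: "'a::topological_group_add set"
  assumes "open V" "0 \<in> V"
  shows "\<exists>Q. open Q \<and> 0 \<in> Q \<and> (\<forall>x\<in>Q. \<forall>y\<in>Q. x - y \<in> V)"
proof -
  have c: "continuous_on UNIV (\<lambda>p::'a\<times>'a. fst p - snd p)"
    by (intro continuous_intros)
  have "open ((\<lambda>p::'a\<times>'a. fst p - snd p) -` V)"
    using c assms(1) continuous_on_open_vimage[of UNIV] by auto
  moreover have "(0,0) \<in> (\<lambda>p::'a\<times>'a. fst p - snd p) -` V" using assms(2) by simp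
  ultimately obtain S T where ST: "open S" "open T" "(0,0) \<in> S \<times> T"
      "S \<times> T \<subseteq> (\<lambda>p::'a\<times>'a. fst p - snd p) -` V"
    by (rule open_prod_elim)
  show ?thesis
    apply (rule exI[of _ "S \<inter> T"])
    using ST by auto
qed

primrec forb :: "('a set \<Rightarrow> 'a) \<Rightarrow> ('a \<Rightarrow> 'a set) \<Rightarrow> nat \<Rightarrow> 'a set" where
  "forb p G 0 = {}"
| "forb p G (Suc n) = forb p G n \<union> {p (forb p G n)} \<union> G (p (forb p G n))"

theorem theorem5p4:
  fixes A :: "'a::{topological_ab_group_add, t2_space} set"
  assumes "infinite A"
    and "abs_cauchy_summable A"
    and "\<forall>a\<in>A. discrete_subspace (gen_subgroup {a})"
  shows "\<exists>B\<subseteq>A. infinite B \<and> top_independent B"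
proof -
  define A' where "A' = A - {0}"
  have infA': "infinite A'" using assms(1) by (simp add: A'_def)
  have ex: "\<forall>a\<in>A'. \<exists>Q F. open Q \<and> 0 \<in> Q \<and>
      (\<forall>x\<in>Q. \<forall>y\<in>Q. x - y \<in> gen_subgroup {a} \<longrightarrow> x - y = 0) \<and>
      finite F \<and> F \<subseteq> A \<and> gen_subgroup (A - F) \<subseteq> Q"
  proof
    fix a assume a: "a \<in> A'"
    have "0 \<in> gen_subgroup {a}" by (rule sg_zero[OF gs_sub])
    then obtain V where V: "open V" "V \<inter> gen_subgroup {a} = {0}"
      using assms(3) a unfolding A'_def discrete_subspace_def by blast
    have V0: "0 \<in> V" using V(2) by blast
    obtain Q where Q: "open Q" "0 \<in> Q" "\<forall>x\<in>Q. \<forall>y\<in>Q. x - y \<in> V"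
      using diff_nhd[OF V(1) V0] by blast
    have "nhd0 Q" using Q(1,2) unfolding nhd0_def by blast
    then have "\<exists>F. finite F \<and> F \<subseteq> A \<and> gen_subgroup (A - F) \<subseteq> Q"
      using assms(2) unfolding abs_cauchy_summable_def by simp
    then obtain F where F: "finite F" "F \<subseteq> A" "gen_subgroup (A - F) \<subseteq> Q"
      by blast
    have Q3: "\<forall>x\<in>Q. \<forall>y\<in>Q. x - y \<in> gen_subgroup {a} \<longrightarrow> x - y = 0"
    proof (intro ballI impI)
      fix x y assume "x \<in> Q" "y \<in> Q" "x - y \<in> gen_subgroup {a}"
      then have "x - y \<in> V \<inter> gen_subgroup {a}" using Q(3) by blast
      then show "x - y = 0" using V(2) by simp
    qed
    show "\<exists>Q F. open Q \<and> 0 \<in> Q \<and>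
      (\<forall>x\<in>Q. \<forall>y\<in>Q. x - y \<in> gen_subgroup {a} \<longrightarrow> x - y = 0) \<and>
      finite F \<and> F \<subseteq> A \<and> gen_subgroup (A - F) \<subseteq> Q"
      using Q(1,2) Q3 F by blast
  qed
  then obtain Ob Fb where OF: "\<forall>a\<in>A'. open (Ob a) \<and> 0 \<in> Ob a \<and>
      (\<forall>x\<in>Ob a. \<forall>y\<in>Ob a. x - y \<in> gen_subgroup {a} \<longrightarrow> x - y = 0) \<and>
      finite (Fb a) \<and> Fb a \<subseteq> A \<and> gen_subgroup (A - Fb a) \<subseteq> Ob a"
  proof -
    obtain Ob where h1: "\<forall>a\<in>A'. \<exists>F. open (Ob a) \<and> 0 \<in> Ob a \<and>
      (\<forall>x\<in>Ob a. \<forall>y\<in>Ob a. x - y \<in> gen_subgroup {a} \<longrightarrow> x - y = 0) \<and>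
      finite F \<and> F \<subseteq> A \<and> gen_subgroup (A - F) \<subseteq> Ob a"
      using bchoice[OF ex] by blast
    obtain Fb where "\<forall>a\<in>A'. open (Ob a) \<and> 0 \<in> Ob a \<and>
      (\<forall>x\<in>Ob a. \<forall>y\<in>Ob a. x - y \<in> gen_subgroup {a} \<longrightarrow> x - y = 0) \<and>
      finite (Fb a) \<and> Fb a \<subseteq> A \<and> gen_subgroup (A - Fb a) \<subseteq> Ob a"
      using bchoice[OF h1] by blast
    then show ?thesis using that by blast
  qed
  define p where "p X = (SOME x. x \<in> A' - X)" for X
  have p: "p X \<in> A' \<and> p X \<notin> X" if "finite X" for X
  proof -
    have "infinite (A' - X)" using infA' that by (simp add: Diff_infinite_finite)
    then have "\<exists>x. x \<in> A' - X" by (metis finite.emptyI ex_in_conv)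
    then show ?thesis unfolding p_def by (metis (mono_tags, lifting) DiffE someI_ex)
  qed
  define fb where "fb = forb p Fb"
  have fin: "finite (fb n)" for n
  proof (induction n)
    case 0 then show ?case by (simp add: fb_def)
  next
    case (Suc n)
    then have "p (fb n) \<in> A'" using p by blast
    then show ?case using Suc OF by (simp add: fb_def)
  qed
  define b where "b n = p (fb n)" for n
  have bA: "b n \<in> A'" "b n \<notin> fb n" for n using p[OF fin[of n]] by (auto simp: b_def)
  have mono: "fb k \<subseteq> fb n" if "k \<le> n" for k n
    using lift_Suc_mono_le[of fb, OF _ that] by (auto simp: fb_def)
  have later: "b k \<in> fb n \<and> Fb (b k) \<subseteq> fb n" if "k < n" for k n
  proof -
    have "b k \<in> fb (Suc k) \<and> Fb (b k) \<subseteq> fb (Suc k)" by (auto simp: fb_def b_def)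
    then show ?thesis using mono[of "Suc k" n] that by auto
  qed
  have bneq: "b n \<noteq> b k" "b n \<notin> Fb (b k)" if "k < n" for k n
    using later[OF that] bA(2)[of n] by auto
  have inj: "inj b"
    by (rule injI) (metis bneq(1) linorder_neq_iff)
  define B where "B = range b"
  have BA: "B \<subseteq> A" using bA(1) by (auto simp: B_def A'_def)
  have infB: "infinite B" unfolding B_def using inj finite_imageD infinite_UNIV_nat by blast
  have tail: "gen_subgroup (b ` {k<..}) \<subseteq> Ob (b k)" for k
  proof -
    have "b ` {k<..} \<subseteq> A - Fb (b k)" using bneq(2) bA(1) by (auto simp: A'_def)
    then have "gen_subgroup (b ` {k<..}) \<subseteq> gen_subgroup (A - Fb (b k))" by (rule gs_mono)
    then show ?thesis using OF bA(1)[of k] by blast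
  qed
  have "top_independent B"
    unfolding top_independent_def
  proof (intro conjI allI impI)
    show "0 \<notin> B" using bA(1) by (auto simp: B_def A'_def)
    fix W :: "'a set" assume W: "nhd0 W"
    then have W0: "0 \<in> W" unfolding nhd0_def by blast
    obtain FW where FW: "finite FW" "FW \<subseteq> A" "gen_subgroup (A - FW) \<subseteq> W"
      using assms(2) W unfolding abs_cauchy_summable_def by blast
    have "finite (b -` FW)" using FW(1) inj by (simp add: finite_vimageI)
    then obtain m where m: "b -` FW \<subseteq> {..<m}" unfolding finite_nat_set_iff_bounded by auto
    define U where "U = (\<Inter>k\<in>{..<m}. Ob (b k))"
    have "open U" unfolding U_def using OF bA(1) by (intro open_INT) auto
    moreover have "0 \<in> U" unfolding U_def using OF bA(1) by auto
    ultimately have "nhd0 U" unfolding nhd0_def by blast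
    moreover have "\<forall>F z. finite F \<and> F \<subseteq> B \<longrightarrow>
           (\<Sum>a\<in>F. zmult (z a) a) \<in> U \<longrightarrow> (\<forall>a\<in>F. zmult (z a) a \<in> W)"
    proof (intro allI impI ballI)
      fix F z a assume Fz: "finite F \<and> F \<subseteq> B" and sU: "(\<Sum>a\<in>F. zmult (z a) a) \<in> U"
        and aF: "a \<in> F"
      define I where "I = b -` F"
      define t where "t i = zmult (z (b i)) (b i)" for i
      have FI: "F = b ` I" using Fz unfolding I_def B_def by auto
      have finI: "finite I" unfolding I_def using Fz inj by (simp add: finite_vimageI)
      have sumeq: "(\<Sum>a\<in>F. zmult (z a) a) = sum t I"
        unfolding FI t_def by (simp add: sum.reindex inj_on_subset[OF inj])
      have key: "k < m \<longrightarrow> k \<in> I \<longrightarrow> t k = 0" for k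
      proof (induction k rule: less_induct)
        case (less k)
        show ?case
        proof (intro impI)
          assume km: "k < m" and kI: "k \<in> I"
          define I1 where "I1 = {i\<in>I. i < k}"
          define I2 where "I2 = {i\<in>I. k < i}"
          have Ieq: "I = insert k (I1 \<union> I2)" using kI by (auto simp: I1_def I2_def)
          have "sum t I = t k + (sum t I1 + sum t I2)"
            unfolding Ieq using finI
            by (subst sum.insert) (auto simp: I1_def I2_def intro: sum.union_disjoint)
          moreover have "sum t I1 = 0" using less km by (auto simp: I1_def intro!: sum.neutral)
          ultimately have seq: "sum t I = t k + sum t I2" by simp
          have "sum t I2 \<in> gen_subgroup (b ` {k<..})"
          proof (rule sg_sum[OF gs_sub], intro ballI)
            fix i assume "i \<in> I2"
            then have "b i \<in> gen_subgroup (b ` {k<..})"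
              by (intro gs_incl[THEN subsetD]) (auto simp: I2_def)
            then show "t i \<in> gen_subgroup (b ` {k<..})"
              unfolding t_def by (rule sg_zmult[OF gs_sub])
          qed
          then have r: "sum t I2 \<in> Ob (b k)" using tail by blast
          have s: "sum t I \<in> Ob (b k)" using sU sumeq km unfolding U_def by auto
          have tk: "t k \<in> gen_subgroup {b k}" unfolding t_def
            by (rule sg_zmult[OF gs_sub]) (simp add: gs_incl[THEN subsetD])
          have H: "\<forall>x\<in>Ob (b k). \<forall>y\<in>Ob (b k). x - y \<in> gen_subgroup {b k} \<longrightarrow> x - y = 0"
            using OF bA(1)[of k] by blast
          have "sum t I - sum t I2 = t k" using seq by simp
          then have "sum t I - sum t I2 \<in> gen_subgroup {b k}" using tk by simp
          then have "sum t I - sum t I2 = 0" using H s r by blast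
          then show "t k = 0" using seq by simp
        qed
      qed
      obtain i where i: "i \<in> I" "a = b i" using aF FI by auto
      show "zmult (z a) a \<in> W"
      proof (cases "i < m")
        case True then show ?thesis using key[of i] i W0 by (simp add: t_def)
      next
        case False
        then have "b i \<notin> FW" using m by auto
        then have "b i \<in> A - FW" using bA(1) by (auto simp: A'_def)
        then have "zmult (z a) a \<in> gen_subgroup (A - FW)"
          using i sg_zmult[OF gs_sub gs_incl[THEN subsetD]] by metis
        then show ?thesis using FW by blast
      qed
    qed
    ultimately show "\<exists>U. nhd0 U \<and> (\<forall>F z. finite F \<and> F \<subseteq> B \<longrightarrow>
           (\<Sum>a\<in>F. zmult (z a) a) \<in> U \<longrightarrow> (\<forall>a\<in>F. zmult (z a) a \<in> W))" by blast
  qed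
  then show ?thesis using BA infB by blast
qed

end
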